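(* Let $D_S>0$, $c_1>0$ and $c_2\ge 0$ be the constants described in the context, and consider, for $t\ge 0$, $$h(t) = e^{tD_S/2} - 1 - \frac{tD_S - c_2}{c_1}.$$ Then there exist $0\le \underline{t} < \overline{t}$ such that $h(t)\le 0$ for all $t\in[\underline{t},\overline{t}]$, where $h(\underline{t}) = h(\overline{t}) = 0$, if and only if $$c_1 < 2 \quad\text{and}\quad c_2 < c_1 - 2\left(1-\log(2/c_1)\right).$$
   Context: Setting: $\mathcal{X}\subset\mathbb{R}^d$ is compact; $f:\mathbb{R}^d\to\mathbb{R}^d$, $g^c:\mathbb{R}^d\to\mathbb{R}^{d\times m}$, $g^{uc}:\mathbb{R}^d\to\mathbb{R}^{d\times p}$, $g=[g^c\ g^{uc}]$, with $f$ and $g$ Lipschitz on $\mathcal{X}$ in the $\infty$-norm with constants $D_f$, $D_g$; $D_S\coloneqq D_f+D_g$. Given $x_0\in\mathcal{X}$ and a target $x_{tg}\in\mathbb{R}^d$, let $g^c_0\coloneqq g^c(x_0)$ (assumed to have full row rank $d$), $g^{uc}_0\coloneqq g^{uc}(x_0)$, and $(g^c_0)^\dagger$ its Moore–Penrose pseudoinverse. All matrix norms are induced $\infty$-norms. Define $c \coloneqq \|f(x_0)\|_\infty + \|g^{uc}_0\|_\infty + D_S\|x_{tg}-x_0\|_\infty$, $c_1 \coloneqq 4c\|(g^c_0)^\dagger\|_\infty$, and $c_2 \coloneqq 4D_S\|(g^c_0)^\dagger\|_\infty\|g^{uc}_0\|_\infty\|\alpha_2\|_\infty$ with $\alpha_2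 = \frac{1}{4}\mathbf{1}_p$ ($\mathbf{1}_p$ the all-ones vector in $\mathbb{R}^p$). *)

theory Defs
  imports Complex_Main
begin

definition h_fun :: "real \<Rightarrow> real \<Rightarrow> real \<Rightarrow> real \<Rightarrow> real" where
  "h_fun DS c1 c2 t = exp (t * DS / 2) - 1 - (t * DS - c2) / c1"

end

theory Submission
  imports Defs "HOL-Analysis.Analysis"
begin

lemma exp_strict: fixes x :: real assumes "x \<noteq> 0" shows "1 + x < exp x"
proof (cases "1 + x/2 \<ge> 0")
  case True
  have "(1 + x/2)^2 \<le> exp (x/2) ^ 2"
    using True by (intro power_mono) auto
  also have "exp (x/2) ^ 2 = exp x"
    by (simp add: power2_eq_square flip: exp_add)
  finally have "1 + x + x^2/4 \<le> exp x" by (simp add: power2_eq_square field_simps)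
  moreover have "x^2 > 0" using assms by simp
  ultimately show ?thesis by linarith
next
  case False
  then have "1 + x < 0" by linarith
  then show ?thesis using exp_gt_zero[of x] by linarith
qed

lemma g_main:
  fixes k C :: real
  assumes "C \<ge> 0" "k > 0"
  defines "g \<equiv> (\<lambda>s. exp s - 1 - k * s + C)"
  shows "(\<exists>a b. 0 \<le> a \<and> a < b \<and> g a = 0 \<and> g b = 0 \<and> (\<forall>s\<in>{a..b}. g s \<le> 0))
         \<longleftrightarrow> (k > 1 \<and> k - k * ln k - 1 + C < 0)"
proof
  assume "\<exists>a b. 0 \<le> a \<and> a < b \<and> g a = 0 \<and> g b = 0 \<and> (\<forall>s\<in>{a..b}. g s \<le> 0)"
  then obtain a b where ab: "0 \<le> a" "a < b" "g a = 0" "g b = 0" "\<forall>s\<in>{a..b}. g s \<le> 0" by blast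
  have k1: "k > 1"
  proof (rule ccontr)
    assume "\<not> k > 1"
    have "b > 0" using ab by linarith
    then have "1 + b < exp b" using exp_strict[of b] by simp
    moreover have "k * b \<le> b" using \<open>\<not> k > 1\<close> \<open>b > 0\<close> by (simp add: mult_le_cancel_right1)
    ultimately have "g b > 0" unfolding g_def using assms(1) by linarith
    then show False using ab by simp
  qed
  moreover have "k - k * ln k - 1 + C < 0"
  proof (rule ccontr)
    assume L: "\<not> k - k * ln k - 1 + C < 0"
    have key: "g s > 0" if "s \<noteq> ln k" for s
    proof -
      have "1 + (s - ln k) < exp (s - ln k)" using exp_strict[of "s - ln k"] that by simp
      also have "exp (s - ln k) = exp s / k" using assms(2) by (simp add: exp_diff)
      finally have "k * (1 + (s - ln k)) < exp s" using assms(2) by (simp add: field_simps)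
      then show ?thesis unfolding g_def using L by (simp add: algebra_simps)
    qed
    have "a \<noteq> ln k \<or> b \<noteq> ln k" using ab by auto
    then show False using key ab by fastforce
  qed
  ultimately show "k > 1 \<and> k - k * ln k - 1 + C < 0" by simp
next
  assume H: "k > 1 \<and> k - k * ln k - 1 + C < 0"
  define s0 where "s0 = ln k"
  have s0pos: "s0 > 0" using H by (simp add: s0_def)
  have gs0: "g s0 < 0" using H assms(2) by (simp add: g_def s0_def)
  have cont: "continuous_on A g" for A unfolding g_def by (intro continuous_intros)
  have g0: "g 0 \<ge> 0" using assms by (simp add: g_def)
  have "\<exists>x. 0 \<le> x \<and> x \<le> s0 \<and> g x = 0"
    by (rule IVT2'[where f=g and a=0 and b=s0 and y=0]) (use gs0 g0 s0pos cont in auto)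
  then obtain a where a: "0 \<le> a" "a \<le> s0" "g a = 0" by blast
  define s1 where "s1 = 4 * k"
  have "(1 + s1/2)^2 \<le> exp (s1/2) ^ 2"
    using assms(2) by (intro power_mono) (auto simp: s1_def)
  also have "exp (s1/2) ^ 2 = exp s1"
    by (simp add: power2_eq_square flip: exp_add)
  finally have "1 + s1 + s1^2/4 \<le> exp s1" by (simp add: power2_eq_square field_simps)
  then have gs1: "g s1 \<ge> 0" using assms by (simp add: g_def s1_def power2_eq_square algebra_simps)
  have "ln k < k" using assms(2) ln_less_self by blast
  then have "s0 \<le> s1" using assms(2) unfolding s0_def s1_def by linarith
  have "\<exists>x. s0 \<le> x \<and> x \<le> s1 \<and> g x = 0"
    by (rule IVT'[where f=g and a=s0 and b=s1 and y=0]) (use gs0 gs1 \<open>s0 \<le> s1\<close> cont in auto)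
  then obtain b where b: "s0 \<le> b" "b \<le> s1" "g b = 0" by blast
  have "a \<noteq> s0" using a gs0 by auto
  then have ab: "a < b" using a b by simp
  have "\<forall>s\<in>{a..b}. g s \<le> 0"
  proof
    fix s assume s: "s \<in> {a..b}"
    define l where "l = (s - a) / (b - a)"
    have l01: "0 \<le> l" "l \<le> 1" using s ab by (auto simp: l_def field_simps)
    have e: "l * (b - a) = s - a" using ab unfolding l_def by simp
    have "(1 - l) * a + l * b = a + l * (b - a)" by (simp add: algebra_simps)
    then have sl: "s = (1 - l) * a + l * b" using e by linarith
    have "exp s \<le> (1 - l) * exp a + l * exp b"
      using convex_onD[OF exp_convex, of l a b] l01 sl by simp
    then have "g s \<le> (1 - l) * g a + l * g b"
      unfolding g_def sl by (simp add: algebra_simps)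
    then show "g s \<le> 0" using a b by simp
  qed
  then show "\<exists>a b. 0 \<le> a \<and> a < b \<and> g a = 0 \<and> g b = 0 \<and> (\<forall>s\<in>{a..b}. g s \<le> 0)"
    using a b ab by blast
qed

theorem lemma2:
  fixes DS c1 c2 :: real
  assumes "DS > 0" and "c1 > 0" and "c2 \<ge> 0"
  shows "(\<exists>tl tu. 0 \<le> tl \<and> tl < tu \<and> h_fun DS c1 c2 tl = 0 \<and> h_fun DS c1 c2 tu = 0 \<and>
            (\<forall>t\<in>{tl..tu}. h_fun DS c1 c2 t \<le> 0))
         \<longleftrightarrow> (c1 < 2 \<and> c2 < c1 - 2 * (1 - ln (2 / c1)))"
proof -
  define k where "k = 2 / c1"
  define C where "C = c2 / c1"
  define g where "g = (\<lambda>s. exp s - 1 - k * s + C)"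
  have k0: "k > 0" using assms by (simp add: k_def)
  have C0: "C \<ge> 0" using assms by (simp add: C_def)
  have hg: "h_fun DS c1 c2 t = g (t * DS / 2)" for t
    using assms by (simp add: h_fun_def g_def k_def C_def field_simps)
  have tg: "g s = h_fun DS c1 c2 (2 * s / DS)" for s
    using hg[of "2 * s / DS"] assms by simp
  have L: "(\<exists>tl tu. 0 \<le> tl \<and> tl < tu \<and> h_fun DS c1 c2 tl = 0 \<and> h_fun DS c1 c2 tu = 0 \<and>
            (\<forall>t\<in>{tl..tu}. h_fun DS c1 c2 t \<le> 0))
        \<longleftrightarrow> (\<exists>a b. 0 \<le> a \<and> a < b \<and> g a = 0 \<and> g b = 0 \<and> (\<forall>s\<in>{a..b}. g s \<le> 0))"
  proof
    assume "\<exists>tl tu. 0 \<le> tl \<and> tl < tu \<and> h_fun DS c1 c2 tl = 0 \<and> h_fun DS c1 c2 tu = 0 \<and>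
            (\<forall>t\<in>{tl..tu}. h_fun DS c1 c2 t \<le> 0)"
    then obtain tl tu where T: "0 \<le> tl" "tl < tu" "h_fun DS c1 c2 tl = 0" "h_fun DS c1 c2 tu = 0"
      "\<forall>t\<in>{tl..tu}. h_fun DS c1 c2 t \<le> 0" by blast
    show "\<exists>a b. 0 \<le> a \<and> a < b \<and> g a = 0 \<and> g b = 0 \<and> (\<forall>s\<in>{a..b}. g s \<le> 0)"
    proof (rule exI[of _ "tl * DS / 2"], rule exI[of _ "tu * DS / 2"], intro conjI ballI)
      show "0 \<le> tl * DS / 2" using T assms by simp
      show "tl * DS / 2 < tu * DS / 2" using T assms by simp
      show "g (tl * DS / 2) = 0" using T hg by simp
      show "g (tu * DS / 2) = 0" using T hg by simp
      fix s assume "s \<in> {tl * DS / 2..tu * DS / 2}"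
      then have "2 * s / DS \<in> {tl..tu}" using assms by (auto simp: field_simps)
      then show "g s \<le> 0" using T tg by simp
    qed
  next
    assume "\<exists>a b. 0 \<le> a \<and> a < b \<and> g a = 0 \<and> g b = 0 \<and> (\<forall>s\<in>{a..b}. g s \<le> 0)"
    then obtain a b where T: "0 \<le> a" "a < b" "g a = 0" "g b = 0" "\<forall>s\<in>{a..b}. g s \<le> 0" by blast
    show "\<exists>tl tu. 0 \<le> tl \<and> tl < tu \<and> h_fun DS c1 c2 tl = 0 \<and> h_fun DS c1 c2 tu = 0 \<and>
            (\<forall>t\<in>{tl..tu}. h_fun DS c1 c2 t \<le> 0)"
    proof (rule exI[of _ "2 * a / DS"], rule exI[of _ "2 * b / DS"], intro conjI ballI)
      show "0 \<le> 2 * a / DS" using T assms by simp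
      show "2 * a / DS < 2 * b / DS" using T assms by (simp add: divide_strict_right_mono)
      show "h_fun DS c1 c2 (2 * a / DS) = 0" using T tg by simp
      show "h_fun DS c1 c2 (2 * b / DS) = 0" using T tg by simp
      fix t assume "t \<in> {2 * a / DS..2 * b / DS}"
      then have "t * DS / 2 \<in> {a..b}" using assms by (auto simp: field_simps)
      then show "h_fun DS c1 c2 t \<le> 0" using T hg by simp
    qed
  qed
  have R: "(k > 1 \<and> k - k * ln k - 1 + C < 0) \<longleftrightarrow> (c1 < 2 \<and> c2 < c1 - 2 * (1 - ln (2 / c1)))"
  proof -
    have "k > 1 \<longleftrightarrow> c1 < 2" using assms by (simp add: k_def field_simps)
    moreover have "k - k * ln k - 1 + C < 0 \<longleftrightarrow> c1 * (k - k * ln k - 1 + C) < 0"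
      using assms by (simp add: mult_less_0_iff)
    moreover have "c1 * (k - k * ln k - 1 + C) = 2 - 2 * ln (2/c1) - c1 + c2"
      using assms by (simp add: k_def C_def field_simps)
    ultimately show ?thesis by auto
  qed
  show ?thesis using L R g_main[OF C0 k0] unfolding g_def by simp
qed

end
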